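(* Consider $n\ge2$ agents in $\mathbb{R}^d$ ($d\ge2$) with undirected graph $\mathcal{G}=(\mathcal{V},\mathcal{E})$, constant desired bearings $\{g_{ij}^*\}_{(i,j)\in\mathcal{E}}$, leaders $\mathcal{V}_\ell=\{1,\dots,n_\ell\}$ with positions $p_i(t)$, $\dot p_i=v_i^*$, and followers $\mathcal{V}_f=\{n_\ell+1,\dots,n\}$, and suppose the standing assumption below holds. Let $p^*(t)$ be the target formation, so that $p_\ell^*(t)=p_\ell(t)$ and $p_f^*(t)=-\mathcal{L}_{ff}^{-1}\mathcal{L}_{f\ell}p_\ell(t)$, and assume $p_i^*(t)\ne c(p^*(t))$ for all $i$. Suppose the velocity of each leader is constant and satisfies $$v_i^*=\alpha_i\frac{p_i^*(t)-c(p^*(t))}{\|p_i^*(t)-c(p^*(t))\|},\quad i\in\mathcal{V}_\ell,$$ where the $\alpha_i\in\mathbb{R}$ are constants such that $\alpha_i/\|p_i^*(t)-c(p^*(t))\|=\alpha_j/\|p_j^*(t)-c(p^*(t))\|=:k(t)$ for all $i,j\in\mathcal{V}_\ell$ and all $t$. For followers $i\in\mathcal{V}_f$ set $\alpha_i:=k(t)\|p_i^*(t)-c(p^*(t))\|$. Then $\dot c(p^*(t))\equiv 0$ and $\dot s(p^*(t))\equiv \mathrm{sgn}(\alpha_i)\sqrt{\frac1n\sum_{i\in\mathcal{V}}\alpha_i^2}$, where $\mathrm{sgn}(\alpha_i)$ denotes the common sign of the leaders' $\alpha_i$.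
   Context: $P_x=I_d-\frac{xx^T}{\|x\|^2}$. The bearing Laplacian $\mathcal{L}\in\mathbb{R}^{dn\times dn}$ has $(i,j)$-th $d\times d$ block $0$ if $i\ne j,(i,j)\notin\mathcal{E}$; $-P_{g_{ij}^*}$ if $i\ne j,(i,j)\in\mathcal{E}$; $\sum_{k\in\mathcal{N}_i}P_{g_{ik}^*}$ if $i=j$; partitioned into leader/follower blocks $\mathcal{L}_{\ell\ell},\mathcal{L}_{\ell f},\mathcal{L}_{f\ell},\mathcal{L}_{ff}$. Target formation: $p^*(t)\in\mathbb{R}^{dn}$ with $p_i^*(t)=p_i(t)$ for leaders and $(p_j^*-p_i^* )/\|p_j^*-p_i^*\|=g_{ij}^*$ for all edges. Infinitesimal bearing rigidity of $q$: with $g_k=(q_j-q_i)/\|q_j-q_i\|$ for the $k$-th oriented edge, $F_B(q)=[g_1^T,\dots,g_m^T]^T$, $R_B=\partial F_B/\partial q$, require $\mathrm{Null}(R_B(q))=\mathrm{span}\{\mathbf{1}_n\otimes I_d,q\}$. Standing assumption: the target formation exists for all $t$, is infinitesimally bearing rigid, and $n_\ell\ge2$; then $\mathcal{L}_{ff}$ is positive definite. Centroid and scale of $q\in\mathbb{R}^{dn}$: $c(q)=\frac1n\sum_{i=1}^n q_i$, $s(q)=\sqrt{\frac1n\sum_{i=1}^n\|q_i-c(q)\|^2}$. *)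

theory Defs
  imports "HOL-Analysis.Analysis"
begin

text \<open>Agents are indexed by 1..n; configurations are maps nat => real^'d
 (only the values on 1..n matter).\<close>

definition agents :: "nat \<Rightarrow> nat set" where
  "agents n = {1..n}"

definition leaders :: "nat \<Rightarrow> nat set" where
  "leaders nl = {1..nl}"

definition followers :: "nat \<Rightarrow> nat \<Rightarrow> nat set" where
  "followers n nl = {nl+1..n}"

definition proj_orth :: "real^'d \<Rightarrow> real^'d^'d" where
  "proj_orth x = mat 1 - (1 / (norm x)\<^sup>2) *\<^sub>R (\<chi> a b. x $ a * x $ b)"

definition bearing_laplacian ::
  "(nat \<times> nat) set \<Rightarrow> (nat \<Rightarrow> nat \<Rightarrow> real^'d) \<Rightarrow> nat \<Rightarrow> nat \<Rightarrow> real^'d^'d" where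
  "bearing_laplacian E g i j =
     (if i = j then (\<Sum>k\<in>{k. (i,k) \<in> E}. proj_orth (g i k))
      else if (i,j) \<in> E then - proj_orth (g i j) else 0)"

definition Lff_pos_def ::
  "nat \<Rightarrow> nat \<Rightarrow> (nat \<times> nat) set \<Rightarrow> (nat \<Rightarrow> nat \<Rightarrow> real^'d) \<Rightarrow> bool" where
  "Lff_pos_def n nl E g \<longleftrightarrow>
     (\<forall>x :: nat \<Rightarrow> real^'d. (\<exists>i\<in>followers n nl. x i \<noteq> 0) \<longrightarrow>
        (\<Sum>i\<in>followers n nl. \<Sum>j\<in>followers n nl.
            x i \<bullet> (bearing_laplacian E g i j *v x j)) > 0)"

definition bearing :: "(nat \<Rightarrow> real^'d) \<Rightarrow> nat \<Rightarrow> nat \<Rightarrow> real^'d" where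
  "bearing q i j = (1 / norm (q j - q i)) *\<^sub>R (q j - q i)"

text \<open>Infinitesimal bearing rigidity: Null(R_B(q)) = span{1_n (x) I_d, q}.
 R_B(q) applied to delta is the directional derivative of F_B at q in direction
 delta, whose blocks are the derivatives of the edge bearings.\<close>
definition inf_bearing_rigid :: "nat \<Rightarrow> (nat \<times> nat) set \<Rightarrow> (nat \<Rightarrow> real^'d) \<Rightarrow> bool" where
  "inf_bearing_rigid n E q \<longleftrightarrow>
     (\<forall>\<delta> :: nat \<Rightarrow> real^'d.
        (\<forall>(i,j)\<in>E. ((\<lambda>\<epsilon>::real. bearing (\<lambda>k. q k + \<epsilon> *\<^sub>R \<delta> k) i j)
                        has_vector_derivative 0) (at 0))
        \<longleftrightarrow> (\<exists>a :: real^'d. \<exists>b :: real. \<forall>i\<in>agents n. \<delta> i = a + b *\<^sub>R q i))"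

definition target_formation ::
  "nat \<Rightarrow> (nat \<times> nat) set \<Rightarrow> (nat \<Rightarrow> nat \<Rightarrow> real^'d) \<Rightarrow> (nat \<Rightarrow> real^'d) \<Rightarrow> (nat \<Rightarrow> real^'d) \<Rightarrow> bool" where
  "target_formation nl E g pl q \<longleftrightarrow>
     (\<forall>i\<in>leaders nl. q i = pl i) \<and>
     (\<forall>(i,j)\<in>E. (1 / norm (q j - q i)) *\<^sub>R (q j - q i) = g i j)"

definition centroid :: "nat \<Rightarrow> (nat \<Rightarrow> real^'d) \<Rightarrow> real^'d" where
  "centroid n q = (1 / real n) *\<^sub>R (\<Sum>i\<in>agents n. q i)"

definition fscale :: "nat \<Rightarrow> (nat \<Rightarrow> real^'d) \<Rightarrow> real" where
  "fscale n q = sqrt ((1 / real n) * (\<Sum>i\<in>agents n. (norm (q i - centroid n q))\<^sup>2))"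

end

theory Submission
  imports Defs
begin

lemma mv_sum_left: "finite S \<Longrightarrow> (sum f S) *v (x::real^'n) = (\<Sum>a\<in>S. f a *v x)"
  by (induction S rule: finite_induct) (auto simp: matrix_vector_mult_add_rdistrib)

lemma outer_mv: "(\<chi> a b. (x::real^'d) $ a * x $ b) *v y = (x \<bullet> y) *\<^sub>R x"
  by (simp add: vec_eq_iff matrix_vector_mult_def inner_vec_def sum_distrib_left algebra_simps)

lemma scaleR_mv: "((c::real) *\<^sub>R (M::real^'n^'m)) *v y = c *\<^sub>R (M *v y)"
  by (simp add: vec_eq_iff matrix_vector_mult_def sum_distrib_left algebra_simps)

lemma proj_orth_mv: "proj_orth (x::real^'d) *v y = y - ((x \<bullet> y) / (norm x)\<^sup>2) *\<^sub>R x"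
  unfolding proj_orth_def
  by (simp add: matrix_vector_mult_diff_rdistrib scaleR_mv outer_mv)

lemma neg_mv: "(- (M::real^'n^'m)) *v y = - (M *v y)"
  by (simp add: vec_eq_iff matrix_vector_mult_def sum_negf)

lemma proj_orth_bearing:
  assumes "norm (g::real^'d) = 1" "(1 / norm d) *\<^sub>R d = g"
  shows "proj_orth g *v d = 0"
proof -
  have dn: "d \<noteq> 0" using assms by auto
  have "d = norm d *\<^sub>R g" using assms(2) dn by auto
  then have "proj_orth g *v d = norm d *\<^sub>R g - ((g \<bullet> (norm d *\<^sub>R g)) / (norm g)\<^sup>2) *\<^sub>R g"
    by (metis proj_orth_mv)
  also have "\<dots> = 0" using assms(1) by (simp add: inner_commute power2_norm_eq_inner[symmetric])
  finally show ?thesis .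
qed

lemma unique_target:
  fixes g :: "nat \<Rightarrow> nat \<Rightarrow> real^'d" and q q' pl :: "nat \<Rightarrow> real^'d"
  assumes graph_V: "E \<subseteq> agents n \<times> agents n"
    and graph_irrefl: "\<forall>i. (i,i) \<notin> E"
    and g_unit: "\<forall>(i,j)\<in>E. norm (g i j) = 1"
    and nl_le: "nl \<le> n"
    and Lff_pd: "Lff_pos_def n nl E g"
    and tq: "target_formation nl E g pl q"
    and tq': "target_formation nl E g pl q'"
  shows "\<forall>i\<in>agents n. q i = q' i"
proof -
  define F where "F = followers n nl"
  define A where "A = agents n"
  define Ld where "Ld = leaders nl"
  have AF: "A = Ld \<union> F" and FA: "F \<subseteq> A" and LA: "Ld \<subseteq> A" and finA: "finite A" and finF: "finite F"
    using nl_le by (auto simp: A_def F_def Ld_def agents_def leaders_def followers_def)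
  have qL: "\<And>j. j \<in> Ld \<Longrightarrow> q j = q' j"
    using tq tq' by (auto simp: target_formation_def Ld_def)
  define x where "x j = (if j \<in> F then q j - q' j else 0)" for j
  have xA: "\<And>j. j \<in> A \<Longrightarrow> x j = q j - q' j"
    using AF qL by (auto simp: x_def)
  have e0: "proj_orth (g i j) *v (r j - r i) = 0"
    if "(i,j) \<in> E" "target_formation nl E g pl r" for i j r
    using that g_unit by (intro proj_orth_bearing) (auto simp: target_formation_def)
  have row: "(\<Sum>j\<in>F. bearing_laplacian E g i j *v x j) = 0" if iF: "i \<in> F" for i
  proof -
    define N where "N = {k. (i,k) \<in> E}"
    have NA: "N \<subseteq> A" using graph_V by (auto simp: N_def A_def)
    have finN: "finite N" using NA finA finite_subset by blast
    have iA: "i \<in> A" using iF FA by auto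
    have iN: "i \<notin> N" using graph_irrefl by (auto simp: N_def)
    have "(\<Sum>j\<in>F. bearing_laplacian E g i j *v x j) = (\<Sum>j\<in>A. bearing_laplacian E g i j *v x j)"
      by (rule sum.mono_neutral_left[OF finA FA]) (auto simp: x_def)
    also have "\<dots> = (\<Sum>j\<in>A. (if j = i then (\<Sum>k\<in>N. proj_orth (g i k)) *v x i else 0)
                        + (if j \<in> N then - (proj_orth (g i j) *v x j) else 0))"
      by (rule sum.cong) (use iN in \<open>auto simp: bearing_laplacian_def N_def neg_mv\<close>)
    also have "\<dots> = (\<Sum>k\<in>N. proj_orth (g i k)) *v x i - (\<Sum>j\<in>N. proj_orth (g i j) *v x j)"
    proof -
      have "(\<Sum>j\<in>A. (if j \<in> N then - (proj_orth (g i j) *v x j) else 0)) = (\<Sum>j\<in>{j\<in>A. j \<in> N}. - (proj_orth (g i j) *v x j))"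
        by (rule sum.inter_filter[OF finA, symmetric])
      also have "{j\<in>A. j \<in> N} = N" using NA by auto
      finally show ?thesis using iA finA by (simp add: sum.distrib sum_negf)
    qed
    also have "\<dots> = (\<Sum>k\<in>N. proj_orth (g i k) *v (x i - x k))"
      by (simp add: mv_sum_left[OF finN] sum_subtractf matrix_vector_mult_diff_distrib)
    also have "\<dots> = 0"
    proof (rule sum.neutral, rule ballI)
      fix k assume kN: "k \<in> N"
      then have ik: "(i,k) \<in> E" by (auto simp: N_def)
      have "x i - x k = (q' k - q' i) - (q k - q i)" using xA iA kN NA by auto
      then show "proj_orth (g i k) *v (x i - x k) = 0"
        using e0[OF ik tq] e0[OF ik tq'] by (simp add: matrix_vector_mult_diff_distrib)
    qed
    finally show ?thesis .
  qed
  have "(\<Sum>i\<in>F. \<Sum>j\<in>F. x i \<bullet> (bearing_laplacian E g i j *v x j)) = 0"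
    using row by (simp add: inner_sum_right[symmetric])
  then have "\<not> (\<exists>i\<in>F. x i \<noteq> 0)"
    using Lff_pd unfolding Lff_pos_def_def F_def by force
  then show ?thesis using qL AF by (auto simp: A_def Ld_def x_def split: if_splits)
qed

theorem proposition2:
  fixes n nl :: nat
    and E :: "(nat \<times> nat) set"
    and g :: "nat \<Rightarrow> nat \<Rightarrow> real^'d"
    and p pstar :: "real \<Rightarrow> nat \<Rightarrow> real^'d"
    and v :: "nat \<Rightarrow> real^'d"
    and \<alpha> :: "nat \<Rightarrow> real"
  assumes d2: "CARD('d) \<ge> 2"
    and n2: "n \<ge> 2"
    and nl_le: "nl \<le> n"
    and graph_V: "E \<subseteq> agents n \<times> agents n"
    and graph_sym: "\<forall>i j. (i,j) \<in> E \<longrightarrow> (j,i) \<in> E"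
    and graph_irrefl: "\<forall>i. (i,i) \<notin> E"
    and g_unit: "\<forall>(i,j)\<in>E. norm (g i j) = 1"
    and leader_dyn: "\<forall>t\<ge>0. \<forall>i\<in>leaders nl.
                       ((\<lambda>\<tau>. p \<tau> i) has_vector_derivative v i) (at t within {0..})"
    and target: "\<forall>t\<ge>0. target_formation nl E g (p t) (pstar t)"
    and rigid: "\<forall>t\<ge>0. inf_bearing_rigid n E (pstar t)"
    and nl2: "nl \<ge> 2"
    and Lff_pd: "Lff_pos_def n nl E g"
    and not_centroid: "\<forall>t\<ge>0. \<forall>i\<in>agents n. pstar t i \<noteq> centroid n (pstar t)"
    and vel: "\<forall>t\<ge>0. \<forall>i\<in>leaders nl.
               v i = (\<alpha> i / norm (pstar t i - centroid n (pstar t))) *\<^sub>R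
                     (pstar t i - centroid n (pstar t))"
    and common_k: "\<forall>t\<ge>0. \<forall>i\<in>leaders nl. \<forall>j\<in>leaders nl.
               \<alpha> i / norm (pstar t i - centroid n (pstar t)) =
               \<alpha> j / norm (pstar t j - centroid n (pstar t))"
  shows "\<forall>t\<ge>0.
           ((\<lambda>\<tau>. centroid n (pstar \<tau>)) has_vector_derivative 0) (at t within {0..}) \<and>
           (let k = \<alpha> 1 / norm (pstar t 1 - centroid n (pstar t));
                \<alpha>t = (\<lambda>i. if i \<in> leaders nl then \<alpha> i
                           else k * norm (pstar t i - centroid n (pstar t)))
            in ((\<lambda>\<tau>. fscale n (pstar \<tau>)) has_real_derivative
                  sgn (\<alpha> 1) * sqrt ((1 / real n) * (\<Sum>i\<in>agents n. (\<alpha>t i)\<^sup>2)))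
                 (at t within {0..}))"
proof (intro allI impI)
  fix t0 :: real assume t0: "t0 \<ge> 0"
  define P where "P = pstar t0"
  define c0 where "c0 = centroid n P"
  define k0 where "k0 = \<alpha> 1 / norm (P 1 - c0)"
  define S0 where "S0 = fscale n P"
  have npos: "real n > 0" using n2 by auto
  have l1: "1 \<in> leaders nl" using nl2 by (auto simp: leaders_def)
  have LA: "leaders nl \<subseteq> agents n" using nl_le by (auto simp: leaders_def agents_def)
  have nz: "\<And>i. i \<in> agents n \<Longrightarrow> norm (P i - c0) > 0"
    unfolding P_def c0_def using not_centroid t0 by auto
  have ak: "\<And>i. i \<in> leaders nl \<Longrightarrow> \<alpha> i / norm (P i - c0) = k0"
    unfolding P_def c0_def k0_def using common_k t0 l1 by blast
  have vk: "\<And>i. i \<in> leaders nl \<Longrightarrow> v i = k0 *\<^sub>R (P i - c0)"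
    using vel t0 ak unfolding P_def c0_def by metis
  have PL: "\<And>i. i \<in> leaders nl \<Longrightarrow> P i = p t0 i"
    using target t0 unfolding target_formation_def P_def by blast
  have plin: "p \<tau> i = p t0 i + (\<tau> - t0) *\<^sub>R v i" if iL: "i \<in> leaders nl" and tau: "\<tau> \<ge> 0" for i \<tau>
  proof -
    have D: "\<And>x. x \<in> {0..} \<Longrightarrow> ((\<lambda>\<tau>. p \<tau> i - \<tau> *\<^sub>R v i) has_vector_derivative 0) (at x within {0..})"
    proof -
      fix x :: real assume "x \<in> {0..}"
      then have "((\<lambda>\<tau>. p \<tau> i) has_vector_derivative v i) (at x within {0..})"
        using leader_dyn iL by auto
      moreover have "((\<lambda>\<tau>. \<tau> *\<^sub>R v i) has_vector_derivative v i) (at x within {0..})"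
        by (auto intro!: derivative_eq_intros)
      ultimately show "((\<lambda>\<tau>. p \<tau> i - \<tau> *\<^sub>R v i) has_vector_derivative 0) (at x within {0..})"
        using has_vector_derivative_diff by fastforce
    qed
    obtain c where "\<And>x. x \<in> {0..} \<Longrightarrow> p x i - x *\<^sub>R v i = c"
      using has_vector_derivative_zero_constant[OF convex_real_interval(1) D] by blast
    then have "p \<tau> i - \<tau> *\<^sub>R v i = p t0 i - t0 *\<^sub>R v i" using tau t0 by auto
    then show ?thesis by (simp add: algebra_simps)
  qed
  define \<delta> where "\<delta> = 1 / (\<bar>k0\<bar> + 1)"
  have dpos: "\<delta> > 0" by (simp add: \<delta>_def add_pos_nonneg)
  define sc where "sc \<tau> = 1 + k0 * (\<tau> - t0)" for \<tau>
  have scpos: "sc \<tau> > 0" if "dist \<tau> t0 < \<delta>" for \<tau>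
  proof -
    have "\<bar>k0 * (\<tau> - t0)\<bar> = \<bar>k0\<bar> * \<bar>\<tau> - t0\<bar>" by (simp add: abs_mult)
    also have "\<dots> \<le> \<bar>k0\<bar> * \<delta>" using that by (intro mult_left_mono) (auto simp: dist_real_def)
    also have "\<dots> < 1" by (simp add: \<delta>_def field_simps)
    finally show ?thesis by (simp add: sc_def)
  qed
  define q where "q \<tau> i = c0 + sc \<tau> *\<^sub>R (P i - c0)" for \<tau> i
  have agree: "\<forall>i\<in>agents n. q \<tau> i = pstar \<tau> i" if tau: "\<tau> \<ge> 0" and sp: "sc \<tau> > 0" for \<tau>
  proof -
    have "target_formation nl E g (p \<tau>) (q \<tau>)"
      unfolding target_formation_def
    proof (intro conjI ballI)
      fix i assume iL: "i \<in> leaders nl"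
      show "q \<tau> i = p \<tau> i"
        using plin[OF iL tau] vk[OF iL] PL[OF iL]
        by (simp add: q_def sc_def algebra_simps)
    next
      fix e assume eE: "e \<in> E"
      obtain i j where e: "e = (i,j)" by (cases e)
      have gij: "(1 / norm (P j - P i)) *\<^sub>R (P j - P i) = g i j"
        using target t0 eE e by (auto simp: target_formation_def P_def)
      have d: "q \<tau> j - q \<tau> i = sc \<tau> *\<^sub>R (P j - P i)" by (simp add: q_def algebra_simps)
      show "case e of (i, j) \<Rightarrow> (1 / norm (q \<tau> j - q \<tau> i)) *\<^sub>R (q \<tau> j - q \<tau> i) = g i j"
        using gij sp by (simp add: e d)
    qed
    then show ?thesis
      using unique_target[OF graph_V graph_irrefl g_unit nl_le Lff_pd] target tau by blast
  qed
  have finA: "finite (agents n)" and cardA: "card (agents n) = n" by (auto simp: agents_def)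
  have sumP: "(\<Sum>i\<in>agents n. P i) = real n *\<^sub>R c0"
    using npos by (simp add: c0_def centroid_def)
  have cq: "centroid n (q \<tau>) = c0" for \<tau>
  proof -
    have "(\<Sum>i\<in>agents n. q \<tau> i) = real n *\<^sub>R c0 + sc \<tau> *\<^sub>R ((\<Sum>i\<in>agents n. P i) - real n *\<^sub>R c0)"
      by (simp add: q_def sum.distrib scaleR_sum_right[symmetric] sum_subtractf cardA sum_constant_scaleR del: sum_constant)
    then show ?thesis using npos by (simp add: centroid_def sumP)
  qed
  have fq: "fscale n (q \<tau>) = sc \<tau> * S0" if sp: "sc \<tau> > 0" for \<tau>
  proof -
    have "(\<Sum>i\<in>agents n. (norm (q \<tau> i - c0))\<^sup>2) = (sc \<tau>)\<^sup>2 * (\<Sum>i\<in>agents n. (norm (P i - c0))\<^sup>2)"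
      using sp by (simp add: q_def sum_distrib_left power_mult_distrib)
    then have "fscale n (q \<tau>) = sqrt ((sc \<tau>)\<^sup>2 * ((1 / real n) * (\<Sum>i\<in>agents n. (norm (P i - c0))\<^sup>2)))"
      by (simp add: fscale_def cq algebra_simps)
    also have "\<dots> = sc \<tau> * S0"
      unfolding real_sqrt_mult S0_def fscale_def c0_def using sp by simp
    finally show ?thesis .
  qed
  have ceq: "centroid n q1 = centroid n q2" "fscale n q1 = fscale n q2"
    if "\<forall>i\<in>agents n. q1 i = q2 i" for q1 q2
    using that by (auto simp: centroid_def fscale_def intro!: sum.cong)
  have near: "q \<tau> i = pstar \<tau> i" "sc \<tau> > 0"
    if "\<tau> \<in> {0..}" "dist \<tau> t0 < \<delta>" "i \<in> agents n" for \<tau> i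
    using agree scpos that by auto
  show "((\<lambda>\<tau>. centroid n (pstar \<tau>)) has_vector_derivative 0) (at t0 within {0..}) \<and>
           (let k = \<alpha> 1 / norm (pstar t0 1 - centroid n (pstar t0));
                \<alpha>t = (\<lambda>i. if i \<in> leaders nl then \<alpha> i
                           else k * norm (pstar t0 i - centroid n (pstar t0)))
            in ((\<lambda>\<tau>. fscale n (pstar \<tau>)) has_real_derivative
                  sgn (\<alpha> 1) * sqrt ((1 / real n) * (\<Sum>i\<in>agents n. (\<alpha>t i)\<^sup>2)))
                 (at t0 within {0..}))"
  proof
    show "((\<lambda>\<tau>. centroid n (pstar \<tau>)) has_vector_derivative 0) (at t0 within {0..})"
    proof (rule has_vector_derivative_transform_within[OF _ dpos])
      show "((\<lambda>\<tau>. c0) has_vector_derivative 0) (at t0 within {0..})" by simp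
      show "t0 \<in> {0..}" using t0 by simp
      fix x assume x0: "x \<in> {0..}" and xd: "dist x t0 < \<delta>"
      have s: "sc x > 0" using scpos[OF xd] .
      have "centroid n (q x) = centroid n (pstar x)"
        by (rule ceq(1)) (use agree[OF _ s] x0 in auto)
      then show "c0 = centroid n (pstar x)" using cq by simp
    qed
    have at: "(if i \<in> leaders nl then \<alpha> i else k0 * norm (P i - c0)) = k0 * norm (P i - c0)"
      if "i \<in> agents n" for i
      using ak[of i] nz[OF that] by (auto simp: field_simps)
    have sumat: "(\<Sum>i\<in>agents n. (if i \<in> leaders nl then \<alpha> i else k0 * norm (P i - c0))\<^sup>2)
        = k0\<^sup>2 * (\<Sum>i\<in>agents n. (norm (P i - c0))\<^sup>2)"
      by (simp add: at sum_distrib_left power_mult_distrib cong: sum.cong)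
    have a1: "\<alpha> 1 = k0 * norm (P 1 - c0)" using ak[OF l1] nz[of 1] l1 LA by (auto simp: field_simps)
    have sg: "sgn (\<alpha> 1) = sgn k0" using a1 nz[of 1] l1 LA by (auto simp: sgn_mult)
    have val: "sgn (\<alpha> 1) * sqrt ((1 / real n) * (\<Sum>i\<in>agents n. (if i \<in> leaders nl then \<alpha> i else k0 * norm (P i - c0))\<^sup>2)) = k0 * S0"
    proof -
      define X where "X = (\<Sum>i\<in>agents n. (norm (P i - c0))\<^sup>2)"
      have "sqrt ((1 / real n) * (k0\<^sup>2 * X)) = sqrt (k0\<^sup>2 * ((1 / real n) * X))"
        by (simp only: mult_ac)
      also have "\<dots> = sqrt (k0\<^sup>2) * sqrt ((1 / real n) * X)" by (rule real_sqrt_mult)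
      also have "\<dots> = \<bar>k0\<bar> * S0" by (simp add: S0_def fscale_def X_def c0_def)
      finally have e: "sqrt ((1 / real n) * (k0\<^sup>2 * X)) = \<bar>k0\<bar> * S0" .
      show ?thesis unfolding sumat sg X_def[symmetric] e
        by (simp add: sgn_mult_abs mult.assoc[symmetric])
    qed
    have Dd: "((\<lambda>\<tau>. fscale n (pstar \<tau>)) has_real_derivative k0 * S0) (at t0 within {0..})"
    proof (rule has_field_derivative_transform_within[OF _ dpos])
      show "((\<lambda>\<tau>. sc \<tau> * S0) has_real_derivative k0 * S0) (at t0 within {0..})"
        unfolding sc_def by (auto intro!: derivative_eq_intros)
      show "t0 \<in> {0..}" using t0 by simp
      fix x assume x0: "x \<in> {0..}" and xd: "dist x t0 < \<delta>"
      have s: "sc x > 0" using scpos[OF xd] .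
      have "fscale n (q x) = fscale n (pstar x)"
        by (rule ceq(2)) (use agree[OF _ s] x0 in auto)
      then show "sc x * S0 = fscale n (pstar x)" using fq[OF s] by simp
    qed
    show "let k = \<alpha> 1 / norm (pstar t0 1 - centroid n (pstar t0));
                \<alpha>t = (\<lambda>i. if i \<in> leaders nl then \<alpha> i
                           else k * norm (pstar t0 i - centroid n (pstar t0)))
            in ((\<lambda>\<tau>. fscale n (pstar \<tau>)) has_real_derivative
                  sgn (\<alpha> 1) * sqrt ((1 / real n) * (\<Sum>i\<in>agents n. (\<alpha>t i)\<^sup>2)))
                 (at t0 within {0..})"
      unfolding Let_def P_def[symmetric] c0_def[symmetric] k0_def[symmetric] val by (rule Dd)
  qed
qed

end
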